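(* Let $\mathcal{OC}_{n,k}$ be the set of OCPs of size $n$ with order $k$. Then $$1+\sum_{n,k\ge1}|\mathcal{OC}_{n,k}|\,t^k\frac{z^n}{n!}=\sqrt{\frac{1-z+zt}{1-z-zt}}.$$
   Context: A cluster is a nonempty word of distinct positive integers. A cluster-cycle of order $k$ is a cycle $(c_1\cdots c_k)$, considered up to cyclic rotation, whose entries $c_i$ are pairwise disjoint clusters. An odd order cluster-permutation (OCP) of size $n$ is a set of cluster-cycles of odd order in which every element of $[n]$ appears exactly once in exactly one cluster. The order of an OCP is the total number of clusters in all its cluster-cycles. *)

theory Defs
  imports "HOL-Analysis.Analysis"
begin

definition cluster :: "nat list \<Rightarrow> bool" where
  "cluster c \<longleftrightarrow> c \<noteq> [] \<and> distinct c \<and> (\<forall>x\<in>set c. 0 < x)"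

text \<open>A cycle considered up to cyclic rotation: the set of all rotations of a word.\<close>
definition rotations :: "'a list \<Rightarrow> 'a list set" where
  "rotations cs = {rotate i cs | i. True}"

definition cluster_cycle :: "nat list list set \<Rightarrow> bool" where
  "cluster_cycle C \<longleftrightarrow> (\<exists>cs. C = rotations cs \<and> (\<forall>c\<in>set cs. cluster c) \<and>
     (\<forall>i<length cs. \<forall>j<length cs. i \<noteq> j \<longrightarrow> set (cs ! i) \<inter> set (cs ! j) = {}))"

definition cyc_rep :: "nat list list set \<Rightarrow> nat list list" where
  "cyc_rep C = (SOME cs. C = rotations cs)"

definition cyc_order :: "nat list list set \<Rightarrow> nat" where
  "cyc_order C = length (cyc_rep C)"

definition OCP :: "nat \<Rightarrow> nat list list set set \<Rightarrow> bool" where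
  "OCP n P \<longleftrightarrow> finite P \<and> (\<forall>C\<in>P. cluster_cycle C \<and> odd (cyc_order C)) \<and>
     (\<forall>x. (\<Sum>C\<in>P. count_list (concat (cyc_rep C)) x) = (if x \<in> {1..n} then 1 else 0))"

definition ocp_order :: "nat list list set set \<Rightarrow> nat" where
  "ocp_order P = (\<Sum>C\<in>P. cyc_order C)"

definition OC :: "nat \<Rightarrow> nat \<Rightarrow> nat list list set set set" where
  "OC n k = {P. OCP n P \<and> ocp_order P = k}"

end

theory Submission
  imports Defs
begin


definition struct :: "('b \<Rightarrow> bool) \<Rightarrow> ('b \<Rightarrow> 'a set) \<Rightarrow> 'a set \<Rightarrow> 'b set set" where
 "struct V E A = {Q. finite Q \<and> (\<forall>b\<in>Q. V b) \<and> disjoint_family_on E Q \<and> \<Union>(E ` Q) = A}"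

definition structk :: "('b \<Rightarrow> bool) \<Rightarrow> ('b \<Rightarrow> 'a set) \<Rightarrow> 'a set \<Rightarrow> nat \<Rightarrow> 'b set set" where
 "structk V E A k = {Q \<in> struct V E A. card Q = k}"

definition blk :: "('b \<Rightarrow> bool) \<Rightarrow> ('b \<Rightarrow> 'a set) \<Rightarrow> 'a \<Rightarrow> 'a set \<Rightarrow> 'b set" where
 "blk V E a A = {b. V b \<and> a \<in> E b \<and> E b \<subseteq> A}"

locale blocks =
  fixes V :: "'b \<Rightarrow> bool" and E :: "'b \<Rightarrow> 'a set"
  assumes ne: "V b \<Longrightarrow> E b \<noteq> {}"
      and fin: "finite A \<Longrightarrow> finite {b. V b \<and> E b \<subseteq> A}"
begin

lemma finite_struct: "finite A \<Longrightarrow> finite (struct V E A)"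
proof -
  assume "finite A"
  have "struct V E A \<subseteq> Pow {b. V b \<and> E b \<subseteq> A}" unfolding struct_def by auto
  thus ?thesis using fin[OF \<open>finite A\<close>] finite_subset by blast
qed

lemma finite_blk: "finite A \<Longrightarrow> finite (blk V E a A)"
  by (rule finite_subset[OF _ fin]) (auto simp: blk_def)

lemma remove_bij:
  assumes bB: "b \<in> blk V E a A"
  shows "bij_betw (\<lambda>Q. Q - {b}) {Q \<in> struct V E A. b \<in> Q} (struct V E (A - E b))"
proof (rule bij_betw_byWitness[where f'="insert b"])
  have Vb: "V b" "a \<in> E b" "E b \<subseteq> A" using bB by (auto simp: blk_def)
  show "\<forall>Q\<in>{Q \<in> struct V E A. b \<in> Q}. insert b (Q - {b}) = Q" by auto
  show "\<forall>R\<in>struct V E (A - E b). insert b R - {b} = R"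
  proof
    fix R assume R: "R \<in> struct V E (A - E b)"
    have "b \<notin> R"
    proof
      assume "b \<in> R"
      hence "E b \<subseteq> A - E b" using R by (auto simp: struct_def)
      thus False using ne[OF Vb(1)] by blast
    qed
    thus "insert b R - {b} = R" by auto
  qed
  show "(\<lambda>Q. Q - {b}) ` {Q \<in> struct V E A. b \<in> Q} \<subseteq> struct V E (A - E b)"
  proof clarify
    fix Q assume Q: "Q \<in> struct V E A" "b \<in> Q"
    have d: "\<And>c. c \<in> Q \<Longrightarrow> c \<noteq> b \<Longrightarrow> E c \<inter> E b = {}"
      using Q unfolding struct_def disjoint_family_on_def by blast
    show "Q - {b} \<in> struct V E (A - E b)"
      using Q d unfolding struct_def disjoint_family_on_def by auto
  qed
  show "insert b ` struct V E (A - E b) \<subseteq> {Q \<in> struct V E A. b \<in> Q}"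
  proof (rule image_subsetI)
    fix R assume R: "R \<in> struct V E (A - E b)"
    have "\<And>c. c \<in> R \<Longrightarrow> E c \<inter> E b = {}" using R by (auto simp: struct_def)
    hence "disjoint_family_on E (insert b R)" using R
      unfolding struct_def disjoint_family_on_def by (auto simp: Int_commute)
    moreover have "\<Union>(E ` insert b R) = A" using R Vb by (auto simp: struct_def)
    ultimately have "insert b R \<in> struct V E A" using R Vb
      unfolding struct_def by auto
    thus "insert b R \<in> {Q \<in> struct V E A. b \<in> Q}" by simp
  qed
qed

lemma notin_struct:
  assumes bB: "b \<in> blk V E a A" and R: "R \<in> struct V E (A - E b)"
  shows "b \<notin> R"
proof
  assume "b \<in> R"
  hence "E b \<subseteq> A - E b" using R by (auto simp: struct_def)
  thus False using ne bB by (auto simp: blk_def)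
qed

lemma remove_bijk:
  assumes bB: "b \<in> blk V E a A"
  shows "bij_betw (\<lambda>Q. Q - {b}) {Q \<in> structk V E A (Suc k). b \<in> Q} (structk V E (A - E b) k)"
proof (rule bij_betw_byWitness[where f'="insert b"])
  have b1: "bij_betw (\<lambda>Q. Q - {b}) {Q \<in> struct V E A. b \<in> Q} (struct V E (A - E b))"
    by (rule remove_bij[OF bB])
  show "\<forall>Q\<in>{Q \<in> structk V E A (Suc k). b \<in> Q}. insert b (Q - {b}) = Q" by auto
  show "\<forall>R\<in>structk V E (A - E b) k. insert b R - {b} = R"
    using notin_struct[OF bB] by (auto simp: structk_def)
  show "(\<lambda>Q. Q - {b}) ` {Q \<in> structk V E A (Suc k). b \<in> Q} \<subseteq> structk V E (A - E b) k"
  proof (rule image_subsetI)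
    fix Q assume Q: "Q \<in> {Q \<in> structk V E A (Suc k). b \<in> Q}"
    hence "Q - {b} \<in> struct V E (A - E b)" using b1 unfolding bij_betw_def structk_def by auto
    moreover have "card (Q - {b}) = k" using Q by (auto simp: structk_def)
    ultimately show "Q - {b} \<in> structk V E (A - E b) k" by (simp add: structk_def)
  qed
  show "insert b ` structk V E (A - E b) k \<subseteq> {Q \<in> structk V E A (Suc k). b \<in> Q}"
  proof (rule image_subsetI)
    fix R assume R: "R \<in> structk V E (A - E b) k"
    hence R1: "R \<in> struct V E (A - E b)" "card R = k" "finite R" by (auto simp: structk_def struct_def)
    have "R \<in> (\<lambda>Q. Q - {b}) ` {Q \<in> struct V E A. b \<in> Q}"
      using b1 R1(1) unfolding bij_betw_def by simp
    then obtain Q where Q: "Q \<in> struct V E A" "b \<in> Q" "R = Q - {b}" by auto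
    hence "insert b R = Q" by auto
    hence "insert b R \<in> {Q \<in> struct V E A. b \<in> Q}" using Q by simp
    moreover have "card (insert b R) = Suc k" using R1 notin_struct[OF bB R1(1)] by simp
    ultimately show "insert b R \<in> {Q \<in> structk V E A (Suc k). b \<in> Q}" by (simp add: structk_def)
  qed
qed

lemma blk_disj:
  assumes "i \<in> blk V E a A" "j \<in> blk V E a A" "i \<noteq> j" "i \<in> Q" "j \<in> Q" "disjoint_family_on E Q"
  shows False
proof -
  have "E i \<inter> E j = {}" using assms(3-6) unfolding disjoint_family_on_def by blast
  thus False using assms(1,2) by (auto simp: blk_def)
qed

lemma struct_cover:
  assumes "Q \<in> struct V E A" "a \<in> A"
  obtains b where "b \<in> Q" "b \<in> blk V E a A"
proof -
  have "a \<in> \<Union>(E ` Q)" using assms by (simp add: struct_def)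
  then obtain b where b: "b \<in> Q" "a \<in> E b" by blast
  have "E b \<subseteq> A" "V b" using assms(1) b(1) by (auto simp: struct_def)
  thus ?thesis using that b by (auto simp: blk_def)
qed

lemma card_struct_remove:
  assumes "finite A" "a \<in> A"
  shows "card (struct V E A) = (\<Sum>b\<in>blk V E a A. card (struct V E (A - E b)))"
proof -
  have eq: "struct V E A = (\<Union>b\<in>blk V E a A. {Q \<in> struct V E A. b \<in> Q})"
  proof (intro equalityI subsetI)
    fix Q assume Q: "Q \<in> struct V E A"
    then obtain b where "b \<in> Q" "b \<in> blk V E a A" using struct_cover assms(2) by blast
    thus "Q \<in> (\<Union>b\<in>blk V E a A. {Q \<in> struct V E A. b \<in> Q})" using Q by blast
  next
    fix Q assume "Q \<in> (\<Union>b\<in>blk V E a A. {Q \<in> struct V E A. b \<in> Q})" thus "Q \<in> struct V E A" by simp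
  qed
  have "card (struct V E A) = (\<Sum>b\<in>blk V E a A. card {Q \<in> struct V E A. b \<in> Q})"
    apply (subst eq)
  proof (rule card_UN_disjoint)
    show "finite (blk V E a A)" using finite_blk assms by auto
    show "\<forall>i\<in>blk V E a A. finite {Q \<in> struct V E A. i \<in> Q}" using finite_struct assms by auto
    show "\<forall>i\<in>blk V E a A. \<forall>j\<in>blk V E a A. i \<noteq> j \<longrightarrow>
        {Q \<in> struct V E A. i \<in> Q} \<inter> {Q \<in> struct V E A. j \<in> Q} = {}"
      using blk_disj[of _ a A _] unfolding struct_def by (auto 0 0)
  qed
  also have "\<dots> = (\<Sum>b\<in>blk V E a A. card (struct V E (A - E b)))"
    by (intro sum.cong refl bij_betw_same_card[OF remove_bij]) assumption
  finally show ?thesis .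
qed

lemma card_structk_remove:
  assumes "finite A" "a \<in> A"
  shows "card (structk V E A (Suc k)) = (\<Sum>b\<in>blk V E a A. card (structk V E (A - E b) k))"
proof -
  have eq: "structk V E A (Suc k) = (\<Union>b\<in>blk V E a A. {Q \<in> structk V E A (Suc k). b \<in> Q})"
  proof (intro equalityI subsetI)
    fix Q assume Q: "Q \<in> structk V E A (Suc k)"
    then obtain b where "b \<in> Q" "b \<in> blk V E a A" using struct_cover assms(2)
      unfolding structk_def by blast
    thus "Q \<in> (\<Union>b\<in>blk V E a A. {Q \<in> structk V E A (Suc k). b \<in> Q})" using Q by blast
  next
    fix Q assume "Q \<in> (\<Union>b\<in>blk V E a A. {Q \<in> structk V E A (Suc k). b \<in> Q})" thus "Q \<in> structk V E A (Suc k)" by simp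
  qed
  have "card (structk V E A (Suc k)) = (\<Sum>b\<in>blk V E a A. card {Q \<in> structk V E A (Suc k). b \<in> Q})"
    apply (subst eq)
  proof (rule card_UN_disjoint)
    show "finite (blk V E a A)" using finite_blk assms by auto
    show "\<forall>i\<in>blk V E a A. finite {Q \<in> structk V E A (Suc k). i \<in> Q}" using finite_struct assms
      by (auto simp: structk_def)
    show "\<forall>i\<in>blk V E a A. \<forall>j\<in>blk V E a A. i \<noteq> j \<longrightarrow>
        {Q \<in> structk V E A (Suc k). i \<in> Q} \<inter> {Q \<in> structk V E A (Suc k). j \<in> Q} = {}"
      using blk_disj[of _ a A _] unfolding structk_def struct_def by (auto 0 0)
  qed
  also have "\<dots> = (\<Sum>b\<in>blk V E a A. card (structk V E (A - E b) k))"
    by (intro sum.cong refl bij_betw_same_card[OF remove_bijk]) assumption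
  finally show ?thesis .
qed

lemma structk_0: "structk V E A 0 = (if A = {} then {{}} else {})"
  by (auto simp: structk_def struct_def disjoint_family_on_def)

lemma structk_empty: "structk V E {} k = (if k = 0 then {{}} else {})"
  using ne by (auto simp: structk_def struct_def disjoint_family_on_def)

lemma struct_empty: "struct V E {} = {{}}"
  using ne by (auto simp: struct_def disjoint_family_on_def)

end


lemma rot_self: "cs \<in> rotations cs"
  unfolding rotations_def by (auto intro: exI[of _ 0])

lemma rot_eqD: "rotations cs = rotations ds \<Longrightarrow> \<exists>i. cs = rotate i ds"
  using rot_self[of cs] unfolding rotations_def by auto

lemma rotations_rotate: "rotations (rotate j cs) = rotations cs"
proof (cases "cs = []")
  case True thus ?thesis by simp
next
  case False
  show ?thesis
  proof (intro equalityI subsetI)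
    fix x assume "x \<in> rotations (rotate j cs)"
    then obtain i where "x = rotate i (rotate j cs)" unfolding rotations_def by auto
    thus "x \<in> rotations cs" unfolding rotations_def by (auto simp: rotate_rotate)
  next
    fix x assume "x \<in> rotations cs"
    then obtain i where x: "x = rotate i cs" unfolding rotations_def by auto
    have "j \<le> length cs * j" using False by (cases cs) auto
    define i' where "i' = i + length cs * j - j"
    have ij: "i' + j = i + length cs * j" using \<open>j \<le> length cs * j\<close> unfolding i'_def by linarith
    have "rotate i' (rotate j cs) = rotate (i + length cs * j) cs"
      by (simp only: rotate_rotate ij)
    also have "\<dots> = rotate i cs"
      by (subst rotate_conv_mod) (simp add: rotate_conv_mod[symmetric])
    finally show "x \<in> rotations (rotate j cs)" unfolding rotations_def x by (auto intro!: exI[of _ i'])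
  qed
qed

lemma rot_set: "ys \<in> rotations cs \<Longrightarrow> set ys = set cs"
  unfolding rotations_def by auto

lemma cel_rot: "\<Union>(set ` rotations cs) = set cs"
  using rot_self[of cs] rot_set[of _ cs] by blast

lemma rot_head:
  assumes "distinct xs" "xs \<noteq> []" "hd (rotate i xs) = hd xs"
  shows "rotate i xs = xs"
proof -
  define m where "m = i mod length xs"
  have m: "m < length xs" using assms(2) by (simp add: m_def)
  have r: "rotate i xs = drop m xs @ take m xs" by (simp add: rotate_drop_take m_def)
  have "hd (rotate i xs) = xs ! m" using m by (simp add: r hd_append hd_drop_conv_nth)
  moreover have "hd xs = xs ! 0" using assms(2) by (simp add: hd_conv_nth)
  ultimately have "xs ! m = xs ! 0" using assms(3) by simp
  hence "m = 0" using nth_eq_iff_index_eq[OF assms(1) m] assms(2) by simp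
  thus ?thesis using r by simp
qed

definition oddV :: "'a list set \<Rightarrow> bool" where
  "oddV C \<longleftrightarrow> (\<exists>cs. C = rotations cs \<and> distinct cs \<and> odd (length cs))"

definition cel :: "'a list set \<Rightarrow> 'a set" where
  "cel C = \<Union>(set ` C)"

lemma finite_distinct_lists: "finite A \<Longrightarrow> finite {cs. distinct cs \<and> set cs \<subseteq> A}"
  using finite_subset_distinct[of A] by (simp add: conj_commute)

interpretation OS: blocks oddV cel
proof
  fix b :: "'a list set" assume "oddV b"
  then obtain cs where "b = rotations cs" "odd (length cs)" unfolding oddV_def by auto
  thus "cel b \<noteq> {}" by (auto simp: cel_def cel_rot)
next
  fix A :: "'a set" assume A: "finite A"
  have "{b. oddV b \<and> cel b \<subseteq> A} \<subseteq> rotations ` {cs. distinct cs \<and> set cs \<subseteq> A}"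
    unfolding oddV_def cel_def by (auto simp: cel_rot)
  thus "finite {b. oddV b \<and> cel b \<subseteq> A}"
    using finite_distinct_lists[OF A] finite_surj by blast
qed

definition EL :: "'a set \<Rightarrow> 'a list set" where
  "EL A = {ys. distinct ys \<and> even (length ys) \<and> set ys \<subseteq> A}"

lemma blk_OS:
  assumes "a \<notin> A"
  shows "bij_betw (\<lambda>ys. rotations (a # ys)) (EL A) (blk oddV cel a (insert a A))"
proof -
  have inj: "inj_on (\<lambda>ys. rotations (a # ys)) (EL A)"
  proof (rule inj_onI)
    fix ys zs assume ys: "ys \<in> EL A" and zs: "zs \<in> EL A" and eq: "rotations (a # ys) = rotations (a # zs)"
    obtain i where i: "a # ys = rotate i (a # zs)" using rot_eqD[OF eq] by blast
    have "distinct (a # zs)" using zs assms by (auto simp: EL_def)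
    hence "rotate i (a # zs) = a # zs" using i by (intro rot_head) (auto simp: i[symmetric])
    thus "ys = zs" using i by simp
  qed
  have img: "(\<lambda>ys. rotations (a # ys)) ` EL A = blk oddV cel a (insert a A)"
  proof (intro equalityI subsetI)
    fix C assume "C \<in> (\<lambda>ys. rotations (a # ys)) ` EL A"
    then obtain ys where "ys \<in> EL A" "C = rotations (a # ys)" by auto
    thus "C \<in> blk oddV cel a (insert a A)" using assms
      unfolding blk_def oddV_def cel_def EL_def by (auto simp: cel_rot intro!: exI[of _ "a#ys"] bexI[OF _ rot_self])
  next
    fix C assume "C \<in> blk oddV cel a (insert a A)"
    hence C0: "oddV C" "a \<in> cel C" "cel C \<subseteq> insert a A" unfolding blk_def by auto
    then obtain cs where C1: "C = rotations cs" "distinct cs" "odd (length cs)" unfolding oddV_def by auto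
    hence "cel C = set cs" by (simp add: cel_def cel_rot)
    hence C: "C = rotations cs" "distinct cs" "odd (length cs)" "a \<in> set cs" "set cs \<subseteq> insert a A"
      using C0 C1 by auto
    obtain xs ys where cs: "cs = xs @ a # ys" using split_list[OF C(4)] by blast
    have r: "rotate (length xs) cs = a # (ys @ xs)" by (simp add: cs rotate_append)
    have "C = rotations (a # (ys @ xs))" using C(1) rotations_rotate[of "length xs" cs] r by simp
    moreover have "ys @ xs \<in> EL A" using C cs unfolding EL_def by auto
    ultimately show "C \<in> (\<lambda>ys. rotations (a # ys)) ` EL A" by blast
  qed
  show ?thesis using inj img by (simp add: bij_betw_def)
qed

fun pOS :: "nat \<Rightarrow> nat" where
  "pOS 0 = 1" | "pOS (Suc 0) = 1" | "pOS (Suc (Suc m)) = pOS (Suc m) + m * (m + 1) * pOS m"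

definition RR :: "nat \<Rightarrow> nat" where
  "RR m = (\<Sum>j\<le>m. if even j then \<Prod>{m - j + 1..m} * pOS (m - j) else 0)"

lemma prod_shift2:
  assumes "i \<le> m"
  shows "\<Prod>{Suc (Suc m) - Suc (Suc i) + 1..Suc (Suc m)} = (m + 1) * (m + 2) * \<Prod>{m - i + 1..m}"
proof -
  define l where "l = m - i + 1"
  have e: "Suc (Suc m) - Suc (Suc i) + 1 = l" by (simp add: l_def)
  have h1: "\<Prod>{l..Suc (Suc m)} = Suc (Suc m) * \<Prod>{l..Suc m}"
    by (rule prod.nat_ivl_Suc') (simp add: l_def)
  have h2: "\<Prod>{l..Suc m} = Suc m * \<Prod>{l..m}"
    by (rule prod.nat_ivl_Suc') (simp add: l_def)
  show ?thesis unfolding e l_def[symmetric] h1 h2 by (simp add: algebra_simps)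
qed

lemma RR_rec: "RR (Suc (Suc m)) = pOS (Suc (Suc m)) + (m + 1) * (m + 2) * RR m"
proof -
  have "RR (Suc (Suc m)) = pOS (Suc (Suc m)) + (\<Sum>i\<le>m. if even i then \<Prod>{Suc (Suc m) - Suc (Suc i) + 1..Suc (Suc m)} * pOS (Suc (Suc m) - Suc (Suc i)) else 0)"
    unfolding RR_def by (simp add: sum.atMost_Suc_shift del: sum.atMost_Suc)
  also have "(\<Sum>i\<le>m. if even i then \<Prod>{Suc (Suc m) - Suc (Suc i) + 1..Suc (Suc m)} * pOS (Suc (Suc m) - Suc (Suc i)) else 0)
     = (\<Sum>i\<le>m. (m + 1) * (m + 2) * (if even i then \<Prod>{m - i + 1..m} * pOS (m - i) else 0))"
  proof (intro sum.cong refl)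
    fix i assume "i \<in> {..m}"
    hence P: "\<Prod>{Suc (Suc m) - Suc (Suc i) + 1..Suc (Suc m)} = (m + 1) * (m + 2) * \<Prod>{m - i + 1..m}"
      by (intro prod_shift2) simp
    show "(if even i then \<Prod>{Suc (Suc m) - Suc (Suc i) + 1..Suc (Suc m)} * pOS (Suc (Suc m) - Suc (Suc i)) else 0)
      = (m + 1) * (m + 2) * (if even i then \<Prod>{m - i + 1..m} * pOS (m - i) else 0)"
      unfolding P by (cases "even i") (simp_all only: diff_Suc_Suc if_True if_False mult.assoc mult_0_right)
  qed
  also have "\<dots> = (m + 1) * (m + 2) * RR m" unfolding RR_def by (simp add: sum_distrib_left)
  finally show ?thesis .
qed

lemma RR_pOS: "RR m = pOS (Suc m)"
proof (induction m rule: pOS.induct)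
  case 1 thus ?case by (simp add: RR_def)
next
  case 2 thus ?case by (simp add: RR_def)
next
  case (3 m) thus ?case by (simp add: RR_rec algebra_simps)
qed

lemma card_OS: "finite A \<Longrightarrow> card (struct oddV cel A) = pOS (card A)"
proof (induction "card A" arbitrary: A rule: less_induct)
  case (less A)
  show ?case
  proof (cases "A = {}")
    case True thus ?thesis by (simp add: OS.struct_empty)
  next
    case False
    then obtain a where aA: "a \<in> A" by blast
    define A' where "A' = A - {a}"
    have A: "A = insert a A'" "a \<notin> A'" using aA by (auto simp: A'_def)
    have fA': "finite A'" using less.prems A by simp
    define m where "m = card A'"
    have cA: "card A = Suc m" using A fA' m_def by simp
    have "card (struct oddV cel A) = (\<Sum>C\<in>blk oddV cel a A. card (struct oddV cel (A - cel C)))"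
      by (rule OS.card_struct_remove[OF less.prems aA])
    also have "\<dots> = (\<Sum>ys\<in>EL A'. card (struct oddV cel (A - cel (rotations (a # ys)))))"
      using blk_OS[OF A(2)] unfolding A
      by (intro sum.reindex_bij_betw[symmetric])
    also have "\<dots> = (\<Sum>ys\<in>EL A'. pOS (m - length ys))"
    proof (intro sum.cong refl)
      fix ys assume ys: "ys \<in> EL A'"
      have e: "A - cel (rotations (a # ys)) = A' - set ys" using A by (auto simp: cel_def cel_rot)
      have c: "card (A' - set ys) = m - length ys" using ys fA' unfolding m_def EL_def
        by (simp add: card_Diff_subset distinct_card)
      have "card (A' - set ys) < card A" using c cA by simp
      thus "card (struct oddV cel (A - cel (rotations (a # ys)))) = pOS (m - length ys)"
        using less.hyps[of "A' - set ys"] fA' e c by simp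
    qed
    also have "\<dots> = (\<Sum>j\<le>m. \<Sum>ys\<in>{ys \<in> EL A'. length ys = j}. pOS (m - length ys))"
    proof (rule sum.group[symmetric])
      show "finite (EL A')" using finite_distinct_lists[OF fA'] by (rule finite_subset[rotated]) (auto simp: EL_def)
      show "length ` EL A' \<subseteq> {..m}" using fA' unfolding EL_def m_def
        by (auto simp: distinct_card[symmetric] card_mono)
    qed simp
    also have "\<dots> = (\<Sum>j\<le>m. if even j then \<Prod>{m - j + 1..m} * pOS (m - j) else 0)"
    proof (intro sum.cong refl)
      fix j assume j: "j \<in> {..m}"
      have e: "{ys \<in> EL A'. length ys = j} = (if even j then {xs. length xs = j \<and> distinct xs \<and> set xs \<subseteq> A'} else {})"
        by (auto simp: EL_def)
      have cnt: "card {ys \<in> EL A'. length ys = j} = (if even j then \<Prod>{m - j + 1..m} else 0)"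
        using card_lists_distinct_length_eq[OF fA', of j] j unfolding e m_def by auto
      have "(\<Sum>ys\<in>{ys \<in> EL A'. length ys = j}. pOS (m - length ys)) = card {ys \<in> EL A'. length ys = j} * pOS (m - j)"
        by simp
      thus "(\<Sum>ys\<in>{ys \<in> EL A'. length ys = j}. pOS (m - length ys)) = (if even j then \<Prod>{m - j + 1..m} * pOS (m - j) else 0)"
        by (simp only: cnt) (cases "even j", simp_all)
    qed
    also have "\<dots> = pOS (card A)" using RR_pOS[of m] cA by (simp add: RR_def)
    finally show ?thesis .
  qed
qed


definition cv :: "'a list \<Rightarrow> bool" where "cv c \<longleftrightarrow> c \<noteq> [] \<and> distinct c"

lemma finite_distinct_lists': "finite A \<Longrightarrow> finite {cs. distinct cs \<and> set cs \<subseteq> A}"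
  using finite_subset_distinct[of A] by (simp add: conj_commute)

interpretation CS: blocks cv set
proof
  fix b :: "'a list" assume "cv b" thus "set b \<noteq> {}" by (simp add: cv_def)
next
  fix A :: "'a set" assume A: "finite A"
  have "{b. cv b \<and> set b \<subseteq> A} \<subseteq> {cs. distinct cs \<and> set cs \<subseteq> A}" by (auto simp: cv_def)
  thus "finite {b. cv b \<and> set b \<subseteq> A}" using finite_distinct_lists'[OF A] finite_subset by blast
qed

definition DL :: "'a set \<Rightarrow> 'a list set" where "DL A = {zs. distinct zs \<and> set zs \<subseteq> A}"

lemma blk_CS:
  assumes "b \<notin> B"
  shows "bij_betw (\<lambda>(zs, i). take i zs @ b # drop i zs) (Sigma (DL B) (\<lambda>zs. {..length zs})) (blk cv set b (insert b B))"
proof -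
  have inj: "inj_on (\<lambda>(zs, i). take i zs @ b # drop i zs) (Sigma (DL B) (\<lambda>zs. {..length zs}))"
  proof (rule inj_onI, clarify)
    fix zs i zs' i'
    assume z: "zs \<in> DL B" "i \<le> length zs" "zs' \<in> DL B" "i' \<le> length zs'"
       and eq: "take i zs @ b # drop i zs = take i' zs' @ b # drop i' zs'"
    have "b \<notin> set (take i zs)" "b \<notin> set (drop i zs)" using z assms unfolding DL_def
      by (auto dest: in_set_takeD in_set_dropD)
    hence e: "take i zs = take i' zs'" "drop i zs = drop i' zs'" using eq append_Cons_eq_iff by metis+
    hence "zs = zs'" by (metis append_take_drop_id)
    moreover have "i = i'" using e(1) z(2,4) \<open>zs = zs'\<close> by (metis length_take min_absorb2)
    ultimately show "zs = zs' \<and> i = i'" by simp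
  qed
  have img: "(\<lambda>(zs, i). take i zs @ b # drop i zs) ` (Sigma (DL B) (\<lambda>zs. {..length zs})) = blk cv set b (insert b B)"
  proof (intro equalityI subsetI)
    fix c assume "c \<in> (\<lambda>(zs, i). take i zs @ b # drop i zs) ` (Sigma (DL B) (\<lambda>zs. {..length zs}))"
    then obtain zs i where z: "zs \<in> DL B" "i \<le> length zs" "c = take i zs @ b # drop i zs" by auto
    have "distinct (take i zs @ drop i zs)" using z unfolding DL_def by simp
    moreover have "b \<notin> set (take i zs)" "b \<notin> set (drop i zs)" using z assms unfolding DL_def
      by (auto dest: in_set_takeD in_set_dropD)
    moreover have "set (take i zs) \<subseteq> B" "set (drop i zs) \<subseteq> B" using z unfolding DL_def
      by (auto dest: in_set_takeD in_set_dropD)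
    ultimately show "c \<in> blk cv set b (insert b B)" using z(3)
      unfolding blk_def cv_def by (auto simp del: append_take_drop_id)
  next
    fix c assume "c \<in> blk cv set b (insert b B)"
    hence c: "c \<noteq> []" "distinct c" "b \<in> set c" "set c \<subseteq> insert b B" unfolding blk_def cv_def by auto
    obtain xs ys where cs: "c = xs @ b # ys" using split_list[OF c(3)] by blast
    have zs: "xs @ ys \<in> DL B" using c cs unfolding DL_def by auto
    have "c = (\<lambda>(zs, i). take i zs @ b # drop i zs) (xs @ ys, length xs)" using cs by simp
    thus "c \<in> (\<lambda>(zs, i). take i zs @ b # drop i zs) ` (Sigma (DL B) (\<lambda>zs. {..length zs}))"
      using zs by (intro image_eqI[where x="(xs @ ys, length xs)"]) auto
  qed
  show ?thesis using inj img by (simp add: bij_betw_def)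
qed

fun lah :: "nat \<Rightarrow> nat \<Rightarrow> nat" where
  "lah 0 0 = 1"
| "lah (Suc n) 0 = 0"
| "lah 0 (Suc k) = 0"
| "lah (Suc n) (Suc k) = (\<Sum>j\<le>n. \<Prod>{n - j + 1..n} * (j + 1) * lah (n - j) k)"

lemma card_CS: "finite B \<Longrightarrow> card (structk cv set B k) = lah (card B) k"
proof (induction k arbitrary: B)
  case 0 thus ?case by (cases "card B") (auto simp: CS.structk_0)
next
  case (Suc k)
  show ?case
  proof (cases "B = {}")
    case True thus ?thesis by (simp add: CS.structk_empty)
  next
    case False
    then obtain b where bB: "b \<in> B" by blast
    define B' where "B' = B - {b}"
    have B: "B = insert b B'" "b \<notin> B'" using bB by (auto simp: B'_def)
    have fB': "finite B'" using Suc.prems B by simp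
    define n where "n = card B'"
    have cB: "card B = Suc n" using B fB' n_def by simp
    have "card (structk cv set B (Suc k)) = (\<Sum>c\<in>blk cv set b B. card (structk cv set (B - set c) k))"
      by (rule CS.card_structk_remove[OF Suc.prems bB])
    also have "\<dots> = (\<Sum>p\<in>Sigma (DL B') (\<lambda>zs. {..length zs}).
        card (structk cv set (B - set ((\<lambda>(zs, i). take i zs @ b # drop i zs) p)) k))"
      using blk_CS[OF B(2)] unfolding B
      by (intro sum.reindex_bij_betw[symmetric])
    also have "\<dots> = (\<Sum>p\<in>Sigma (DL B') (\<lambda>zs. {..length zs}). lah (n - length (fst p)) k)"
    proof (intro sum.cong refl)
      fix p assume "p \<in> Sigma (DL B') (\<lambda>zs. {..length zs})"
      then obtain zs i where p: "p = (zs, i)" and z: "zs \<in> DL B'" "i \<le> length zs" by auto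
      have "set (take i zs @ b # drop i zs) = insert b (set zs)"
        by (metis append_take_drop_id set_append Un_insert_right list.set(2))
      hence e: "B - set (take i zs @ b # drop i zs) = B' - set zs" using B by auto
      have c: "card (B' - set zs) = n - length zs" using z fB' unfolding n_def DL_def
        by (simp add: card_Diff_subset distinct_card)
      show "card (structk cv set (B - set ((\<lambda>(zs, i). take i zs @ b # drop i zs) p)) k) = lah (n - length (fst p)) k"
        using Suc.IH[of "B' - set zs"] fB' e c p by simp
    qed
    also have "\<dots> = (\<Sum>zs\<in>DL B'. \<Sum>i\<le>length zs. lah (n - length zs) k)"
      by (subst sum.Sigma) (auto simp: DL_def finite_distinct_lists'[OF fB'] case_prod_beta)
    also have "\<dots> = (\<Sum>zs\<in>DL B'. (length zs + 1) * lah (n - length zs) k)" by simp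
    also have "\<dots> = (\<Sum>j\<le>n. \<Sum>zs\<in>{zs \<in> DL B'. length zs = j}. (length zs + 1) * lah (n - length zs) k)"
    proof (rule sum.group[symmetric])
      show "finite (DL B')" using finite_distinct_lists'[OF fB'] by (simp add: DL_def)
      show "length ` DL B' \<subseteq> {..n}" using fB' unfolding DL_def n_def
        by (auto simp: distinct_card[symmetric] card_mono)
    qed simp
    also have "\<dots> = (\<Sum>j\<le>n. \<Prod>{n - j + 1..n} * (j + 1) * lah (n - j) k)"
    proof (intro sum.cong refl)
      fix j assume j: "j \<in> {..n}"
      have e: "{zs \<in> DL B'. length zs = j} = {xs. length xs = j \<and> distinct xs \<and> set xs \<subseteq> B'}"
        by (auto simp: DL_def)
      have cnt: "card {zs \<in> DL B'. length zs = j} = \<Prod>{n - j + 1..n}"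
        using card_lists_distinct_length_eq[OF fB', of j] j unfolding e n_def by auto
      have "(\<Sum>zs\<in>{zs \<in> DL B'. length zs = j}. (length zs + 1) * lah (n - length zs) k)
          = card {zs \<in> DL B'. length zs = j} * ((j + 1) * lah (n - j) k)" by simp
      thus "(\<Sum>zs\<in>{zs \<in> DL B'. length zs = j}. (length zs + 1) * lah (n - length zs) k) = \<Prod>{n - j + 1..n} * (j + 1) * lah (n - j) k"
        by (simp only: cnt mult.assoc)
    qed
    also have "\<dots> = lah (card B) (Suc k)" by (simp add: cB)
    finally show ?thesis .
  qed
qed


lemma count_distinct: "distinct c \<Longrightarrow> count_list c x = (if x \<in> set c then 1 else 0)"
  using distinct_count_atmost_1[of c] count_mset[of c x] by metis

lemma distinct_of_count: "(\<And>x. count_list xs x \<le> 1) \<Longrightarrow> distinct xs"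
proof (induction xs)
  case Nil thus ?case by simp
next
  case (Cons a xs)
  have "count_list xs a = 0"
    using Cons.prems[of a] by simp
  hence "a \<notin> set xs" by (simp add: count_list_0_iff)
  moreover have "distinct xs"
  proof (rule Cons.IH)
    fix x show "count_list xs x \<le> 1" using Cons.prems[of x] by (auto split: if_splits)
  qed
  ultimately show ?case by simp
qed

lemma sum_list_rotate: "sum_list (rotate i (xs :: 'a::comm_monoid_add list)) = sum_list xs"
proof -
  define m where "m = i mod length xs"
  have "sum_list xs = sum_list (take m xs) + sum_list (drop m xs)"
    by (metis append_take_drop_id sum_list_append)
  thus ?thesis by (simp add: rotate_drop_take add.commute m_def)
qed

lemma rep_rot:
  assumes "C = rotations cs"
  shows "rotations (cyc_rep C) = C" "\<exists>i. cs = rotate i (cyc_rep C)"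
proof -
  show r: "rotations (cyc_rep C) = C" unfolding cyc_rep_def using assms
    by (metis (mono_tags) someI)
  show "\<exists>i. cs = rotate i (cyc_rep C)" using rot_eqD[of cs "cyc_rep C"] r assms by simp
qed

lemma rep_props:
  assumes "C = rotations cs"
  shows "length (cyc_rep C) = length cs" "set (cyc_rep C) = set cs"
    "distinct (cyc_rep C) = distinct cs"
    "count_list (concat (cyc_rep C)) x = count_list (concat cs) x"
    "cel C = set cs"
proof -
  obtain i where i: "cs = rotate i (cyc_rep C)" using rep_rot(2)[OF assms] by blast
  show "length (cyc_rep C) = length cs" "set (cyc_rep C) = set cs"
    "distinct (cyc_rep C) = distinct cs" using i by auto
  show "count_list (concat (cyc_rep C)) x = count_list (concat cs) x"
    unfolding i count_list_concat by (simp only: rotate_map[symmetric] sum_list_rotate)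
  show "cel C = set cs" using assms by (simp add: cel_def cel_rot)
qed

lemma count_rep:
  assumes "oddV C" "\<forall>c\<in>cel C. distinct c"
  shows "count_list (concat (cyc_rep C)) x = (\<Sum>c\<in>cel C. if x \<in> set c then 1 else 0)"
proof -
  obtain cs where cs: "C = rotations cs" "distinct cs" using assms(1) unfolding oddV_def by auto
  have "count_list (concat (cyc_rep C)) x = count_list (concat cs) x" using rep_props(4)[OF cs(1)] .
  also have "\<dots> = (\<Sum>c\<in>set cs. count_list c x)"
    unfolding count_list_concat using cs(2) by (simp add: sum_list_distinct_conv_sum_set)
  also have "\<dots> = (\<Sum>c\<in>cel C. if x \<in> set c then 1 else 0)"
    using rep_props(5)[OF cs(1)] assms(2) by (auto intro!: sum.cong simp: count_distinct)
  finally show ?thesis .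
qed

definition CSn :: "nat \<Rightarrow> nat \<Rightarrow> nat list set set" where
  "CSn n k = structk cv set {1..n} k"

lemma backward:
  assumes S: "S \<in> CSn n k" and Q: "Q \<in> struct oddV cel S"
  shows "Q \<in> OC n k"
proof -
  have S1: "finite S" "\<forall>c\<in>S. cv c" "disjoint_family_on set S" "\<Union>(set ` S) = {1..n}" "card S = k"
    using S unfolding CSn_def structk_def struct_def by auto
  have Q1: "finite Q" "\<forall>C\<in>Q. oddV C" "disjoint_family_on cel Q" "\<Union>(cel ` Q) = S"
    using Q unfolding struct_def by auto
  have celS: "\<And>C. C \<in> Q \<Longrightarrow> cel C \<subseteq> S" using Q1(4) by blast
  have fincel: "\<And>C. C \<in> Q \<Longrightarrow> finite (cel C)" using celS S1(1) finite_subset by blast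
  have cc: "cluster_cycle C \<and> odd (cyc_order C)" if C: "C \<in> Q" for C
  proof -
    obtain cs where cs: "C = rotations cs" "distinct cs" "odd (length cs)" using Q1(2) C unfolding oddV_def by auto
    have sub: "set cs \<subseteq> S" using celS[OF C] rep_props(5)[OF cs(1)] by simp
    have "\<forall>c\<in>set cs. cluster c"
    proof
      fix c assume c: "c \<in> set cs"
      hence "c \<in> S" using sub by auto
      hence "cv c" "set c \<subseteq> {1..n}" using S1 by auto
      thus "cluster c" unfolding cluster_def cv_def by auto
    qed
    moreover have "\<forall>i<length cs. \<forall>j<length cs. i \<noteq> j \<longrightarrow> set (cs ! i) \<inter> set (cs ! j) = {}"
    proof (intro allI impI)
      fix i j assume ij: "i < length cs" "j < length cs" "i \<noteq> j"
      have "cs ! i \<noteq> cs ! j" using nth_eq_iff_index_eq[OF cs(2) ij(1,2)] ij(3) by simp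
      moreover have "cs ! i \<in> S" "cs ! j \<in> S" using sub ij by auto
      ultimately show "set (cs ! i) \<inter> set (cs ! j) = {}" using S1(3) unfolding disjoint_family_on_def by blast
    qed
    ultimately have "cluster_cycle C" unfolding cluster_cycle_def using cs(1) by blast
    moreover have "odd (cyc_order C)" unfolding cyc_order_def using rep_props(1)[OF cs(1)] cs(3) by simp
    ultimately show ?thesis by simp
  qed
  have dist: "\<forall>c\<in>cel C. distinct c" if "C \<in> Q" for C using celS[OF that] S1(2) by (auto simp: cv_def)
  have sumeq: "(\<Sum>C\<in>Q. g C) = (\<Sum>c\<in>S. f c)" if "\<And>C. C \<in> Q \<Longrightarrow> g C = (\<Sum>c\<in>cel C. f c)" for g f
  proof -
    have "(\<Sum>c\<in>S. f c) = (\<Sum>C\<in>Q. \<Sum>c\<in>cel C. f c)"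
      unfolding Q1(4)[symmetric] using Q1(1,3) fincel by (intro sum.UNION_disjoint_family) auto
    thus ?thesis using that by simp
  qed
  have count: "(\<Sum>C\<in>Q. count_list (concat (cyc_rep C)) x) = (if x \<in> {1..n} then 1 else 0)" for x
  proof -
    have "(\<Sum>C\<in>Q. count_list (concat (cyc_rep C)) x) = (\<Sum>c\<in>S. if x \<in> set c then 1 else 0)"
      using count_rep Q1(2) dist by (intro sumeq) auto
    also have "\<dots> = card (S \<inter> {c. x \<in> set c})" using S1(1) by (simp add: sum.If_cases)
    also have "card (S \<inter> {c. x \<in> set c}) = card {c \<in> S. x \<in> set c}" by (rule arg_cong[where f=card]) auto
    also have "\<dots> = (if x \<in> {1..n} then 1 else 0)"
    proof (cases "x \<in> {1..n}")
      case True
      then obtain c where c: "c \<in> S" "x \<in> set c" using S1(4) by blast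
      have "{c \<in> S. x \<in> set c} = {c}"
        using c S1(3) unfolding disjoint_family_on_def by blast
      thus ?thesis using True by simp
    next
      case False
      hence e: "{c \<in> S. x \<in> set c} = {}" using S1(4) by blast
      show ?thesis unfolding e using False by simp
    qed
    finally show ?thesis .
  qed
  have "OCP n Q" unfolding OCP_def using Q1(1) cc count by blast
  moreover have "ocp_order Q = k"
  proof -
    have "ocp_order Q = (\<Sum>c\<in>S. 1)"
      unfolding ocp_order_def
    proof (rule sumeq)
      fix C assume C: "C \<in> Q"
      obtain cs where cs: "C = rotations cs" "distinct cs" using Q1(2) C unfolding oddV_def by auto
      show "cyc_order C = (\<Sum>c\<in>cel C. 1)"
        unfolding cyc_order_def rep_props(1)[OF cs(1)] rep_props(5)[OF cs(1)]
        using cs(2) by (simp add: distinct_card)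
    qed
    thus ?thesis using S1(5) by simp
  qed
  ultimately show ?thesis unfolding OC_def by simp
qed


lemma forward:
  assumes PO: "P \<in> OC n k"
  shows "\<Union>(cel ` P) \<in> CSn n k \<and> P \<in> struct oddV cel (\<Union>(cel ` P))"
proof -
  define S where "S = \<Union>(cel ` P)"
  have P1: "finite P" "\<And>C. C \<in> P \<Longrightarrow> cluster_cycle C \<and> odd (cyc_order C)"
    "\<And>x. (\<Sum>C\<in>P. count_list (concat (cyc_rep C)) x) = (if x \<in> {1..n} then 1 else 0)"
    "ocp_order P = k"
    using PO unfolding OC_def OCP_def by auto
  have le1: "count_list (concat (cyc_rep C)) x \<le> 1" if C: "C \<in> P" for C x
  proof -
    have "count_list (concat (cyc_rep C)) x \<le> (\<Sum>C\<in>P. count_list (concat (cyc_rep C)) x)"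
      using C P1(1) by (intro member_le_sum) auto
    also have "\<dots> \<le> 1" using P1(3)[of x] by simp
    finally show ?thesis .
  qed
  have key: "oddV C \<and> cel C = set (cyc_rep C) \<and> distinct (concat (cyc_rep C)) \<and> (\<forall>c\<in>set (cyc_rep C). cluster c) \<and> distinct (cyc_rep C)"
    if C: "C \<in> P" for C
  proof -
    obtain cs where cs: "C = rotations cs" "\<forall>c\<in>set cs. cluster c"
      using P1(2)[OF C] unfolding cluster_cycle_def by blast
    have cl: "\<forall>c\<in>set (cyc_rep C). cluster c" using cs rep_props(2)[OF cs(1)] by simp
    have dc: "distinct (concat (cyc_rep C))" using le1[OF C] by (intro distinct_of_count)
    have "[] \<notin> set (cyc_rep C)" using cl by (auto simp: cluster_def)
    hence dr: "distinct (cyc_rep C)" using dc by (simp add: distinct_concat_iff removeAll_id)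
    moreover have "odd (length (cyc_rep C))" using P1(2)[OF C] by (simp add: cyc_order_def)
    moreover have "C = rotations (cyc_rep C)" using rep_rot(1)[OF cs(1)] by simp
    ultimately have "oddV C" unfolding oddV_def by blast
    moreover have "cel C = set (cyc_rep C)" using rep_props(2,5)[OF cs(1)] by simp
    ultimately show ?thesis using dc cl dr by blast
  qed
  have cnt_pos: "count_list (concat (cyc_rep C)) x \<ge> 1" if "x \<in> set c" "c \<in> cel C" "C \<in> P" for x c C
  proof -
    have "x \<in> set (concat (cyc_rep C))" using that key[OF that(3)] by auto
    hence "count_list (concat (cyc_rep C)) x \<noteq> 0" by (simp add: count_list_0_iff)
    thus ?thesis by simp
  qed
  have two: False if "C \<in> P" "C' \<in> P" "C \<noteq> C'" "x \<in> set c" "c \<in> cel C" "x \<in> set d" "d \<in> cel C'" for C C' x c d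
  proof -
    have "count_list (concat (cyc_rep C)) x + count_list (concat (cyc_rep C')) x
        = (\<Sum>D\<in>{C, C'}. count_list (concat (cyc_rep D)) x)" using that(3) by simp
    also have "\<dots> \<le> (\<Sum>D\<in>P. count_list (concat (cyc_rep D)) x)"
      using that(1,2) P1(1) by (intro sum_mono2) auto
    also have "\<dots> \<le> 1" using P1(3)[of x] by simp
    finally show False using cnt_pos[OF that(4,5,1)] cnt_pos[OF that(6,7,2)] by simp
  qed
  have fincel: "finite (cel C)" if "C \<in> P" for C using key[OF that] by simp
  have disjP: "disjoint_family_on cel P"
    unfolding disjoint_family_on_def
  proof (intro ballI impI)
    fix C C' assume "C \<in> P" "C' \<in> P" "C \<noteq> C'"
    show "cel C \<inter> cel C' = {}"
    proof (rule ccontr)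
      assume "cel C \<inter> cel C' \<noteq> {}"
      then obtain c where c: "c \<in> cel C" "c \<in> cel C'" by blast
      have "cluster c" using key[OF \<open>C \<in> P\<close>] c by auto
      then obtain x where "x \<in> set c" unfolding cluster_def by (cases c) auto
      thus False using two[OF \<open>C \<in> P\<close> \<open>C' \<in> P\<close> \<open>C \<noteq> C'\<close>] c by blast
    qed
  qed
  have Pstruct: "P \<in> struct oddV cel S"
    unfolding struct_def S_def using P1(1) key disjP by auto
  have finS: "finite S" unfolding S_def using P1(1) fincel by auto
  have cvS: "\<forall>c\<in>S. cv c" unfolding S_def using key by (auto simp: cluster_def cv_def)
  have disjS: "disjoint_family_on set S"
    unfolding disjoint_family_on_def
  proof (intro ballI impI)
    fix c d assume c: "c \<in> S" and d: "d \<in> S" and cd: "c \<noteq> d"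
    obtain C where C: "C \<in> P" "c \<in> cel C" using c unfolding S_def by auto
    obtain D where D: "D \<in> P" "d \<in> cel D" using d unfolding S_def by auto
    show "set c \<inter> set d = {}"
    proof (cases "C = D")
      case True
      have "distinct (concat (cyc_rep C))" "c \<in> set (cyc_rep C)" "d \<in> set (cyc_rep C)"
        using key[OF C(1)] C D True by auto
      thus ?thesis using cd by (simp add: distinct_concat_iff)
    next
      case False
      thus ?thesis using two[OF C(1) D(1) False _ C(2) _ D(2)] by blast
    qed
  qed
  have unS: "\<Union>(set ` S) = {1..n}"
  proof (intro equalityI subsetI)
    fix x assume "x \<in> \<Union>(set ` S)"
    then obtain c C where "x \<in> set c" "c \<in> cel C" "C \<in> P" unfolding S_def by auto
    hence "1 \<le> count_list (concat (cyc_rep C)) x" by (rule cnt_pos)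
    also have "\<dots> \<le> (\<Sum>C\<in>P. count_list (concat (cyc_rep C)) x)"
      using \<open>C \<in> P\<close> P1(1) by (intro member_le_sum) auto
    finally show "x \<in> {1..n}" using P1(3)[of x] by (auto split: if_splits)
  next
    fix x assume x: "x \<in> {1..n}"
    hence "(\<Sum>C\<in>P. count_list (concat (cyc_rep C)) x) \<noteq> 0" using P1(3)[of x] by simp
    then obtain C where C: "C \<in> P" "count_list (concat (cyc_rep C)) x \<noteq> 0"
      by (meson sum.neutral)
    hence "x \<in> set (concat (cyc_rep C))" by (simp add: count_list_0_iff)
    then obtain c where "c \<in> set (cyc_rep C)" "x \<in> set c" by auto
    thus "x \<in> \<Union>(set ` S)" using key[OF C(1)] C(1) unfolding S_def by auto
  qed
  have cardS: "card S = k"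
  proof -
    have "card S = (\<Sum>C\<in>P. card (cel C))" unfolding S_def
      using P1(1) fincel disjP by (intro card_UN_disjoint) (auto simp: disjoint_family_on_def)
    also have "\<dots> = (\<Sum>C\<in>P. cyc_order C)"
    proof (intro sum.cong refl)
      fix C assume C: "C \<in> P"
      have "distinct (cyc_rep C)" using key[OF C] by simp
      thus "card (cel C) = cyc_order C" using key[OF C] by (simp add: cyc_order_def distinct_card)
    qed
    also have "\<dots> = k" using P1(4) by (simp add: ocp_order_def)
    finally show ?thesis .
  qed
  have "S \<in> CSn n k" unfolding CSn_def structk_def struct_def
    using finS cvS disjS unS cardS by auto
  thus ?thesis using Pstruct S_def by simp
qed

lemma card_OC: "card (OC n k) = lah n k * pOS k"
proof -
  have eq: "OC n k = (\<Union>S\<in>CSn n k. struct oddV cel S)"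
    using forward backward by blast
  have finCS: "finite (CSn n k)"
    using CS.finite_struct[of "{1..n}"] unfolding CSn_def structk_def by auto
  have finS: "\<And>S. S \<in> CSn n k \<Longrightarrow> finite S"
    unfolding CSn_def structk_def struct_def by auto
  have "card (OC n k) = (\<Sum>S\<in>CSn n k. card (struct oddV cel S))"
    unfolding eq
  proof (rule card_UN_disjoint[OF finCS])
    show "\<forall>S\<in>CSn n k. finite (struct oddV cel S)" using OS.finite_struct finS by blast
    show "\<forall>S\<in>CSn n k. \<forall>S'\<in>CSn n k. S \<noteq> S' \<longrightarrow> struct oddV cel S \<inter> struct oddV cel S' = {}"
      unfolding struct_def by auto
  qed
  also have "\<dots> = (\<Sum>S\<in>CSn n k. pOS k)"
  proof (intro sum.cong refl)
    fix S assume S: "S \<in> CSn n k"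
    have "card S = k" using S unfolding CSn_def structk_def by auto
    thus "card (struct oddV cel S) = pOS k" using card_OS[OF finS[OF S]] by simp
  qed
  also have "\<dots> = lah n k * pOS k" using card_CS[of "{1..n::nat}" k] by (simp add: CSn_def)
  finally show ?thesis .
qed


lemma prod_fact: "j \<le> n \<Longrightarrow> \<Prod>{n - j + 1..n} * fact (n - j) = (fact n :: nat)"
proof -
  assume j: "j \<le> n"
  have "fact n div fact (n - j) = \<Prod>{n - j + 1..n}" by (rule fact_div_fact) simp
  moreover have "fact (n - j) dvd (fact n :: nat)" by (rule fact_dvd) simp
  ultimately show ?thesis by (metis dvd_div_mult_self)
qed

lemma Rsum: "(\<Sum>i<n. (n - i) * (i choose k)) = Suc n choose Suc (Suc k)"
proof (induction n)
  case 0 thus ?case by simp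
next
  case (Suc n)
  have "(\<Sum>i<Suc n. (Suc n - i) * (i choose k)) = (\<Sum>i<Suc n. (n - i) * (i choose k) + (i choose k))"
    by (intro sum.cong refl) (auto simp: Suc_diff_le algebra_simps)
  also have "\<dots> = (\<Sum>i<Suc n. (n - i) * (i choose k)) + (\<Sum>i<Suc n. (i choose k))"
    by (simp add: sum.distrib)
  also have "(\<Sum>i<Suc n. (n - i) * (i choose k)) = (\<Sum>i<n. (n - i) * (i choose k))" by simp
  also have "(\<Sum>i<Suc n. (i choose k)) = Suc n choose Suc k"
    using sum_choose_upper[of k n] by (simp add: lessThan_Suc_atMost)
  finally show ?case using Suc.IH by simp
qed

lemma Tsum: "(\<Sum>j<n. (j + 1) * (n - 1 - j choose k)) = Suc n choose Suc (Suc k)"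
proof -
  have "(\<Sum>j<n. (j + 1) * (n - 1 - j choose k)) = (\<Sum>j<n. (\<lambda>i. (n - i) * (i choose k)) (n - Suc j))"
    by (intro sum.cong refl) (auto simp: Suc_diff_le)
  also have "\<dots> = (\<Sum>i<n. (n - i) * (i choose k))" by (rule sum.nat_diff_reindex)
  finally show ?thesis using Rsum by simp
qed

lemma lah_0: "lah m 0 = (if m = 0 then 1 else 0)"
  by (cases m) auto

lemma lah_closed: "fact (Suc k) * lah (Suc n) (Suc k) = fact (Suc n) * (n choose k)"
proof (induction k arbitrary: n)
  case 0
  have "lah (Suc n) (Suc 0) = (\<Sum>j\<le>n. \<Prod>{n - j + 1..n} * (j + 1) * lah (n - j) 0)"
    by (simp only: lah.simps)
  also have "\<dots> = (\<Sum>j\<le>n. if j = n then \<Prod>{n - j + 1..n} * (j + 1) else 0)"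
  proof (intro sum.cong refl)
    fix j assume "j \<in> {..n}"
    thus "\<Prod>{n - j + 1..n} * (j + 1) * lah (n - j) 0 = (if j = n then \<Prod>{n - j + 1..n} * (j + 1) else 0)"
      by (cases "j = n") (simp_all add: lah_0)
  qed
  also have "\<dots> = \<Prod>{1..n} * (n + 1)" by (subst sum.delta) simp_all
  also have "\<dots> = fact (Suc n)" by (simp add: fact_prod[where 'a=nat])
  finally show ?case by simp
next
  case (Suc k)
  have "fact (Suc (Suc k)) * lah (Suc n) (Suc (Suc k)) =
     (Suc (Suc k)) * (\<Sum>j\<le>n. \<Prod>{n - j + 1..n} * (j + 1) * (fact (Suc k) * lah (n - j) (Suc k)))"
    by (simp add: sum_distrib_left algebra_simps)
  also have "(\<Sum>j\<le>n. \<Prod>{n - j + 1..n} * (j + 1) * (fact (Suc k) * lah (n - j) (Suc k)))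
      = (\<Sum>j<n. fact n * ((j + 1) * (n - 1 - j choose k)))"
  proof -
    have "(\<Sum>j\<le>n. \<Prod>{n - j + 1..n} * (j + 1) * (fact (Suc k) * lah (n - j) (Suc k)))
       = (\<Sum>j<n. \<Prod>{n - j + 1..n} * (j + 1) * (fact (Suc k) * lah (n - j) (Suc k)))"
      by (simp add: lessThan_Suc_atMost[symmetric])
    also have "\<dots> = (\<Sum>j<n. fact n * ((j + 1) * (n - 1 - j choose k)))"
    proof (intro sum.cong refl)
      fix j assume "j \<in> {..<n}"
      hence j: "j < n" by simp
      hence e: "n - j = Suc (n - 1 - j)" by simp
      have "fact (Suc k) * lah (n - j) (Suc k) = fact (n - j) * (n - 1 - j choose k)"
        unfolding e using Suc.IH[of "n - 1 - j"] by simp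
      hence "\<Prod>{n - j + 1..n} * (j + 1) * (fact (Suc k) * lah (n - j) (Suc k))
          = (\<Prod>{n - j + 1..n} * fact (n - j)) * ((j + 1) * (n - 1 - j choose k))"
        by (simp add: algebra_simps)
      also have "\<dots> = fact n * ((j + 1) * (n - 1 - j choose k))" using prod_fact[of j n] j by simp
      finally show "\<Prod>{n - j + 1..n} * (j + 1) * (fact (Suc k) * lah (n - j) (Suc k)) = fact n * ((j + 1) * (n - 1 - j choose k))" .
    qed
    finally show ?thesis .
  qed
  also have "\<dots> = fact n * (Suc n choose Suc (Suc k))"
    by (simp only: sum_distrib_left[symmetric] Tsum)
  finally have "fact (Suc (Suc k)) * lah (Suc n) (Suc (Suc k)) = fact n * ((Suc n choose Suc (Suc k)) * Suc (Suc k))"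
    by (simp add: algebra_simps)
  also have "\<dots> = fact n * (Suc n * (n choose Suc k))" by (simp only: Suc_times_binomial_eq)
  also have "\<dots> = fact (Suc n) * (n choose Suc k)" by (simp add: algebra_simps)
  finally show ?case .
qed


lemma pOS_oe: "pOS (Suc (2*m)) = (2*m+1) * pOS (2*m) \<and> pOS (Suc (Suc (2*m))) = (2*m+1) * pOS (Suc (2*m))"
proof (induction m)
  case 0 thus ?case by simp
next
  case (Suc m)
  define a where "a = pOS (2*m)"
  define b where "b = pOS (Suc (2*m))"
  define c where "c = pOS (Suc (Suc (2*m)))"
  have IH: "b = (2*m+1) * a" "c = (2*m+1) * b" using Suc.IH unfolding a_def b_def c_def by auto
  have r1: "pOS (Suc (Suc (Suc (2*m)))) = c + Suc (2*m) * (Suc (2*m) + 1) * b"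
    unfolding b_def c_def by (rule pOS.simps(3))
  have r2: "pOS (Suc (Suc (Suc (Suc (2*m))))) = pOS (Suc (Suc (Suc (2*m)))) + Suc (Suc (2*m)) * (Suc (Suc (2*m)) + 1) * c"
    unfolding c_def by (rule pOS.simps(3))
  have A: "pOS (Suc (Suc (Suc (2*m)))) = (2*m+3) * c"
    unfolding r1 IH(2) by (simp add: algebra_simps del: pOS.simps)
  have B: "pOS (Suc (Suc (Suc (Suc (2*m))))) = (2*m+3) * pOS (Suc (Suc (Suc (2*m))))"
    unfolding r2 A by (simp add: algebra_simps del: pOS.simps)
  have e1: "Suc (2 * Suc m) = Suc (Suc (Suc (2*m)))" by simp
  have e2: "2 * Suc m = Suc (Suc (2*m))" by simp
  show ?case unfolding e1 e2 using A B unfolding c_def by (simp add: algebra_simps del: pOS.simps)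
qed

definition cc :: "nat \<Rightarrow> real" where "cc m = (-1)^m * ((-1/2 :: real) gchoose m)"

lemma cc_0: "cc 0 = 1" by (simp add: cc_def)

lemma gb_rec: "((a::real) gchoose Suc k) = (a gchoose k) * (a - of_nat k) / (of_nat k + 1)"
  unfolding gbinomial_prod_rev
  by (simp add: prod.atLeast0_lessThan_Suc field_simps)

lemma cc_Suc: "cc (Suc m) = cc m * (2 * real m + 1) / (2 * real m + 2)"
  unfolding cc_def gb_rec by (simp add: field_simps)

lemma cc_nonneg: "cc m \<ge> 0"
  by (induction m) (simp_all add: cc_0 cc_Suc)

definition qq :: "nat \<Rightarrow> real" where "qq k = real (pOS k) / fact k"

lemma qq_step:
  assumes "pOS (Suc n) = (2*m+1) * pOS n" "n = 2*m \<or> n = Suc (2*m)"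
  shows "qq (Suc n) = qq n * (2 * real m + 1) / real (Suc n)"
proof -
  have p: "real (pOS (Suc n)) = (2 * real m + 1) * real (pOS n)"
    using assms(1) by (metis of_nat_mult of_nat_add of_nat_1 of_nat_mult of_nat_numeral)
  have f: "(fact (Suc n) :: real) = real (Suc n) * fact n" by simp
  show ?thesis unfolding qq_def p f by (simp add: field_simps)
qed

lemma qq_cc: "qq (2*m) = cc m \<and> qq (Suc (2*m)) = cc m"
proof (induction m)
  case 0 thus ?case by (simp add: qq_def cc_0)
next
  case (Suc m)
  have o1: "qq (Suc (2*m)) = qq (2*m)"
    using qq_step[of "2*m" m] conjunct1[OF pOS_oe[of m]] by (simp del: pOS.simps add: add.commute)
  have o2: "qq (Suc (Suc (2*m))) = qq (Suc (2*m)) * (2 * real m + 1) / (2 * real m + 2)"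
    using qq_step[of "Suc (2*m)" m] conjunct2[OF pOS_oe[of m]] by (simp del: pOS.simps add: algebra_simps)
  have e: "2 * Suc m = Suc (Suc (2*m))" by simp
  have A: "qq (2 * Suc m) = cc (Suc m)" unfolding e o2 cc_Suc using Suc.IH by simp
  have h: "qq (Suc (Suc (Suc (2*m)))) = qq (Suc (Suc (2*m))) * (2 * real (Suc m) + 1) / real (Suc (Suc (Suc (2*m))))"
    using qq_step[of "Suc (Suc (2*m))" "Suc m"] conjunct1[OF pOS_oe[of "Suc m"]]
    by (simp del: pOS.simps)
  have a: "real (Suc (Suc (Suc (2*m)))) = 2 * real (Suc m) + 1" by simp
  have a0: "2 * real (Suc m) + 1 \<noteq> 0" by simp
  have o3: "qq (Suc (Suc (Suc (2*m)))) = qq (Suc (Suc (2*m)))"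
    unfolding h a using a0 by simp
  have "qq (Suc (2 * Suc m)) = cc (Suc m)" using A o3 unfolding e by simp
  thus ?case using A by simp
qed


lemma cc_series:
  assumes "\<bar>x\<bar> < 1"
  shows "(\<lambda>m. cc m * x ^ m) sums (1 - x) powr (-1/2)"
proof -
  have a: "\<bar>- x\<bar> < 1" using assms by simp
  have s: "(\<lambda>m. ((-1/2) gchoose m) * (-x) ^ m) sums (1 + (-x)) powr (-1/2)"
    by (rule gen_binomial_real[OF a])
  have e: "(\<lambda>m. ((-1/2) gchoose m) * (-x) ^ m) = (\<lambda>m. cc m * x ^ m)"
  proof
    fix m show "((-1/2) gchoose m) * (-x) ^ m = cc m * x ^ m"
      by (simp only: cc_def power_minus[of x m] mult_ac)
  qed
  have e2: "1 + (-x) = 1 - x" by simp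
  show ?thesis using s unfolding e e2 .
qed

lemma cc_has_sum:
  assumes "\<bar>x\<bar> < 1" "x \<ge> 0"
  shows "((\<lambda>m. cc m * x ^ m) has_sum (1 - x) powr (-1/2)) UNIV"
proof (rule norm_summable_imp_has_sum)
  show "(\<lambda>m. cc m * x ^ m) sums (1 - x) powr (-1/2)" using cc_series[OF assms(1)] .
  have "\<And>m. norm (cc m * x ^ m) = cc m * x ^ m" using cc_nonneg assms(2) by simp
  thus "summable (\<lambda>n. norm (cc n * x ^ n))" using cc_series[OF assms(1)] by (simp add: sums_iff)
qed

lemma qq_0: "qq 0 = 1" by (simp add: qq_def)

lemma outer:
  assumes w: "\<bar>w\<bar> < 1"
  shows "((\<lambda>k. qq k * w ^ k) has_sum ((1 + w) * (1 - w^2) powr (-1/2) - 1)) {1..}"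
proof -
  define A where "A = (1 - w^2) powr (-1/2)"
  have w2: "\<bar>w^2\<bar> < 1" "w^2 \<ge> 0" using w by (auto simp: abs_square_less_1)
  have E: "((\<lambda>m. cc m * (w^2) ^ m) has_sum A) UNIV" unfolding A_def by (rule cc_has_sum[OF w2])
  have ev: "((\<lambda>k. qq k * w ^ k) has_sum A) (range (\<lambda>m. 2*m))"
  proof -
    have "((\<lambda>k. qq k * w ^ k) \<circ> (\<lambda>m. 2*m)) = (\<lambda>m. cc m * (w^2) ^ m)"
      using qq_cc by (auto simp: power_mult)
    thus ?thesis using E by (subst has_sum_reindex) (auto simp: inj_on_def)
  qed
  have od: "((\<lambda>k. qq k * w ^ k) has_sum w * A) (range (\<lambda>m. Suc (2*m)))"
  proof -
    have "((\<lambda>k. qq k * w ^ k) \<circ> (\<lambda>m. Suc (2*m))) = (\<lambda>m. w * (cc m * (w^2) ^ m))"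
    proof (rule ext)
      fix m have q: "qq (Suc (2*m)) = cc m" using qq_cc by blast
      have "w ^ Suc (2*m) = w * (w^2)^m" by (simp add: power_mult)
      thus "((\<lambda>k. qq k * w ^ k) \<circ> (\<lambda>m. Suc (2*m))) m = w * (cc m * (w^2) ^ m)"
        using q by simp
    qed
    thus ?thesis using has_sum_cmult_right[OF E, of w] by (subst has_sum_reindex) (auto simp: inj_on_def)
  qed
  have U: "range (\<lambda>m. 2*m) \<union> range (\<lambda>m. Suc (2*m)) = (UNIV :: nat set)"
  proof -
    have "n \<in> range (\<lambda>m. 2*m) \<union> range (\<lambda>m. Suc (2*m))" for n :: nat
    proof (cases "even n")
      case True then obtain m where "n = 2*m" by (rule evenE)
      thus ?thesis by auto
    next
      case False then obtain m where "n = Suc (2*m)" by (metis oddE Suc_eq_plus1)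
      thus ?thesis by auto
    qed
    thus ?thesis by auto
  qed
  have D: "range (\<lambda>m. 2*m) \<inter> range (\<lambda>m. Suc (2*m)) = ({} :: nat set)" by auto presburger
  have tot: "((\<lambda>k. qq k * w ^ k) has_sum A + w * A) UNIV"
    using has_sum_Un_disjoint[OF ev od D] unfolding U .
  have "((\<lambda>k. qq k * w ^ k) has_sum (A + w * A) - qq 0 * w ^ 0) (UNIV - {0})"
    by (rule has_sum_Diff[OF tot]) (auto simp: has_sum_finite_iff)
  moreover have "UNIV - {0} = {1::nat..}" by auto
  ultimately show ?thesis by (simp add: qq_0 A_def algebra_simps)
qed

lemma choose_neg: "((- real (Suc k)) gchoose j) * (- z) ^ j = real (j + k choose k) * (z::real) ^ j"
proof -
  have "((- real (Suc k)) gchoose j) = (-1) ^ j * (real j - (- real (Suc k)) - 1 gchoose j)"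
    by (rule gbinomial_negated_upper)
  also have "real j - (- real (Suc k)) - 1 = real (j + k)" by simp
  also have "(real (j + k) gchoose j) = real (j + k choose j)" by (simp add: binomial_gbinomial)
  also have "(j + k choose j) = (j + k choose k)" using binomial_symmetric[of j "j+k"] by simp
  finally have g: "((- real (Suc k)) gchoose j) = (-1) ^ j * real (j + k choose k)" .
  have "((- real (Suc k)) gchoose j) * (- z) ^ j = ((-1) ^ j * (-1) ^ j) * real (j + k choose k) * z ^ j"
    unfolding g power_minus[of z j] by (simp only: mult_ac)
  thus ?thesis by (simp only: minus_one_mult_self mult_1)
qed

lemma negbin_sums:
  assumes "\<bar>z\<bar> < 1"
  shows "(\<lambda>j. real (j + k choose k) * z ^ j) sums (1 - z) powr (- real (Suc k))"
proof -
  have a: "\<bar>- z\<bar> < 1" using assms by simp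
  have s: "(\<lambda>j. ((- real (Suc k)) gchoose j) * (-z) ^ j) sums (1 + (-z)) powr (- real (Suc k))"
    by (rule gen_binomial_real[OF a])
  have e: "(\<lambda>j. ((- real (Suc k)) gchoose j) * (-z) ^ j) = (\<lambda>j. real (j + k choose k) * z ^ j)"
    by (rule ext) (rule choose_neg)
  have e2: "1 + (-z) = 1 - z" by simp
  show ?thesis using s unfolding e e2 .
qed

lemma inner:
  assumes z: "\<bar>z\<bar> < 1"
  shows "((\<lambda>n. real (n - 1 choose k) * z ^ n) has_sum (z / (1 - z)) ^ Suc k) {1..}"
proof -
  have h0: "((\<lambda>j. real (j + k choose k) * z ^ j) has_sum (1 - z) powr (- real (Suc k))) UNIV"
  proof (rule norm_summable_imp_has_sum)
    show "(\<lambda>j. real (j + k choose k) * z ^ j) sums (1 - z) powr (- real (Suc k))" using negbin_sums[OF z] .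
    have "\<bar>\<bar>z\<bar>\<bar> < 1" using z by simp
    from negbin_sums[OF this, of k] have "summable (\<lambda>j. real (j + k choose k) * \<bar>z\<bar> ^ j)" by (simp add: sums_iff)
    thus "summable (\<lambda>n. norm (real (n + k choose k) * z ^ n))" by (simp add: abs_mult power_abs)
  qed
  have pz: "1 - z > 0" using z by simp
  have p1: "(1 - z) powr (- real (Suc k)) = inverse ((1 - z) ^ Suc k)"
    by (simp only: powr_minus powr_realpow[OF pz])
  have val: "(1 - z) powr (- real (Suc k)) * z ^ Suc k = (z / (1 - z)) ^ Suc k"
    unfolding p1 power_divide by (simp add: divide_inverse mult.commute)
  have h1: "((\<lambda>j. real (j + k choose k) * z ^ (j + Suc k)) has_sum (z / (1 - z)) ^ Suc k) UNIV"
    using has_sum_cmult_left[OF h0, of "z ^ Suc k"] unfolding val by (simp add: power_add algebra_simps)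
  have bij: "bij_betw (\<lambda>j. j + Suc k) UNIV {Suc k..}"
    by (rule bij_betwI[where g="\<lambda>n. n - Suc k"]) auto
  have h2: "((\<lambda>n. real (n - 1 choose k) * z ^ n) has_sum (z / (1 - z)) ^ Suc k) {Suc k..}"
  proof -
    have "((\<lambda>j. (\<lambda>n. real (n - 1 choose k) * z ^ n) (j + Suc k)) has_sum (z / (1 - z)) ^ Suc k) UNIV"
      using h1 by simp
    thus ?thesis using has_sum_reindex_bij_betw[OF bij] by blast
  qed
  show ?thesis
  proof (subst has_sum_cong_neutral[where T="{Suc k..}" and g="\<lambda>n. real (n - 1 choose k) * z ^ n"])
    show "((\<lambda>n. real (n - 1 choose k) * z ^ n) has_sum (z / (1 - z)) ^ Suc k) {Suc k..}" by (rule h2)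
  qed auto
qed


lemma qq_nonneg: "qq k \<ge> 0" by (simp add: qq_def)

lemma coeff_eq:
  assumes "n \<ge> 1" "k \<ge> 1"
  shows "real (card (OC n k)) * t ^ k * z ^ n / fact n = real (n - 1 choose (k - 1)) * z ^ n * (qq k * t ^ k)"
proof -
  obtain n' k' where nk: "n = Suc n'" "k = Suc k'" using assms by (metis Suc_pred' less_le_trans zero_less_one)
  have L: "fact (Suc k') * lah (Suc n') (Suc k') = fact (Suc n') * (n' choose k')" by (rule lah_closed)
  hence L': "(fact (Suc k') :: real) * real (lah (Suc n') (Suc k')) = fact (Suc n') * real (n' choose k')"
    by (metis (mono_tags) of_nat_fact of_nat_mult)
  have fk: "(fact (Suc k') :: real) \<noteq> 0" by simp
  have fn: "(fact (Suc n') :: real) \<noteq> 0" by simp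
  have "real (lah (Suc n') (Suc k')) = fact (Suc n') * real (n' choose k') / fact (Suc k')"
    using L' fk by (simp add: field_simps)
  thus ?thesis unfolding nk card_OC qq_def using fk fn by (simp add: field_simps)
qed

lemma sqrt_id:
  fixes w :: real
  assumes "\<bar>w\<bar> < 1"
  shows "(1 + w) * (1 - w^2) powr (-1/2) = sqrt ((1 + w) / (1 - w))"
proof -
  have p: "1 - w^2 > 0" using assms by (simp add: abs_square_less_1)
  have a: "1 + w > 0" "1 - w > 0" using assms by auto
  have hP: "(1 - w^2) powr (-1/2) = inverse (sqrt (1 - w^2))"
  proof -
    have "(-1/2::real) = - (1/2)" by simp
    hence "(1 - w^2) powr (-1/2) = inverse ((1 - w^2) powr (1/2))" by (simp only: powr_minus)
    thus ?thesis using p by (simp add: powr_half_sqrt)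
  qed
  have hS: "sqrt ((1 + w) / (1 - w)) * sqrt (1 - w^2) = 1 + w"
  proof -
    have "(1 + w) / (1 - w) * (1 - w^2) = (1 + w)^2" using a by (simp add: field_simps power2_eq_square)
    hence "sqrt ((1 + w) / (1 - w)) * sqrt (1 - w^2) = sqrt ((1 + w)^2)" by (simp only: real_sqrt_mult[symmetric])
    thus ?thesis using a by simp
  qed
  have s: "sqrt (1 - w^2) > 0" using p by simp
  show ?thesis unfolding hP using hS s by (simp add: field_simps)
qed

theorem mainTheorem6:
  shows "\<exists>\<epsilon>>0. \<forall>z t :: real. \<bar>z\<bar> < \<epsilon> \<and> \<bar>t\<bar> < \<epsilon> \<longrightarrow>
     ((\<lambda>(n, k). real (card (OC n k)) * t ^ k * z ^ n / fact n)
        has_sum (sqrt ((1 - z + z * t) / (1 - z - z * t)) - 1)) ({1..} \<times> {1..})"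
proof (intro exI[of _ "1/3"] conjI allI impI)
  show "(0::real) < 1/3" by simp
  fix z t :: real assume zt: "\<bar>z\<bar> < 1/3 \<and> \<bar>t\<bar> < 1/3"
  have z1: "\<bar>z\<bar> < 1" and za1: "\<bar>\<bar>z\<bar>\<bar> < 1" using zt by auto
  have pz: "1 - z > 0" "1 - \<bar>z\<bar> > 0" using zt by auto
  define w where "w = t * z / (1 - z)"
  define wa where "wa = \<bar>t\<bar> * \<bar>z\<bar> / (1 - \<bar>z\<bar>)"
  have tz: "\<bar>t\<bar> * \<bar>z\<bar> \<le> 1/3 * (1/3)" using zt by (intro mult_mono) auto
  have wa1: "\<bar>wa\<bar> < 1"
  proof -
    have "wa \<ge> 0" unfolding wa_def using pz by simp
    moreover have "wa < 1" unfolding wa_def using pz tz zt by (simp add: field_simps)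
    ultimately show ?thesis by simp
  qed
  have w1: "\<bar>w\<bar> < 1"
  proof -
    have "1 - \<bar>z\<bar> \<le> \<bar>1 - z\<bar>" by simp
    hence "\<bar>w\<bar> \<le> wa" unfolding w_def wa_def using pz
      by (simp add: abs_mult frac_le abs_divide)
    thus ?thesis using wa1 by simp
  qed
  define g where "g = (\<lambda>(k, n). real (n - 1 choose (k - 1)) * z ^ n * (qq k * t ^ k))"
  define ga where "ga = (\<lambda>(k, n). real (n - 1 choose (k - 1)) * \<bar>z\<bar> ^ n * (qq k * \<bar>t\<bar> ^ k))"
  have inn: "((\<lambda>n. g (k, n)) has_sum qq k * w ^ k) {1..}" if k1: "k \<in> {1..}" for k
  proof -
    obtain k' where k: "k = Suc k'" using k1 by (cases k) auto
    have "((\<lambda>n. real (n - 1 choose k') * z ^ n * (qq k * t ^ k)) has_sum (z / (1 - z)) ^ Suc k' * (qq k * t ^ k)) {1..}"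
      by (rule has_sum_cmult_left[OF inner[OF z1]])
    moreover have "(z / (1 - z)) ^ Suc k' * (qq k * t ^ k) = qq k * w ^ k"
      unfolding w_def k by (simp add: power_mult_distrib power_divide field_simps)
    ultimately show ?thesis unfolding g_def k by simp
  qed
  have inna: "((\<lambda>n. ga (k, n)) has_sum qq k * wa ^ k) {1..}" if k1: "k \<in> {1..}" for k
  proof -
    obtain k' where k: "k = Suc k'" using k1 by (cases k) auto
    have "((\<lambda>n. real (n - 1 choose k') * \<bar>z\<bar> ^ n * (qq k * \<bar>t\<bar> ^ k)) has_sum (\<bar>z\<bar> / (1 - \<bar>z\<bar>)) ^ Suc k' * (qq k * \<bar>t\<bar> ^ k)) {1..}"
      by (rule has_sum_cmult_left[OF inner[OF za1]])
    moreover have "(\<bar>z\<bar> / (1 - \<bar>z\<bar>)) ^ Suc k' * (qq k * \<bar>t\<bar> ^ k) = qq k * wa ^ k"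
      unfolding wa_def k by (simp add: power_mult_distrib power_divide field_simps)
    ultimately show ?thesis unfolding ga_def k by simp
  qed
  have suma: "ga summable_on Sigma {1..} (\<lambda>_. {1..})"
  proof (rule summable_on_SigmaI[OF inna])
    show "(\<lambda>k. qq k * wa ^ k) summable_on {1..}" using outer[OF wa1] by (rule has_sum_imp_summable)
    show "\<And>x y. x \<in> {1..} \<Longrightarrow> y \<in> {1..} \<Longrightarrow> 0 \<le> ga (x, y)"
      unfolding ga_def using qq_nonneg by simp
  qed
  have normg: "norm (g p) = ga p" for p
    unfolding g_def ga_def using qq_nonneg
    by (cases p) (simp add: abs_mult power_abs)
  have sumg: "g summable_on Sigma {1..} (\<lambda>_. {1..})"
  proof -
    have "(\<lambda>p. norm (g p)) = ga" using normg by (rule ext)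
    hence "(\<lambda>p. norm (g p)) summable_on Sigma {1..} (\<lambda>_. {1..})" using suma by simp
    thus ?thesis by (rule summable_on_iff_abs_summable_on_real[THEN iffD2])
  qed
  have G: "(g has_sum ((1 + w) * (1 - w^2) powr (-1/2) - 1)) (Sigma {1..} (\<lambda>_. {1..}))"
    by (rule has_sum_SigmaI[OF inn outer[OF w1] sumg])
  have val: "(1 + w) * (1 - w^2) powr (-1/2) - 1 = sqrt ((1 - z + z * t) / (1 - z - z * t)) - 1"
  proof -
    have "(1 - z + z * t) / (1 - z - z * t) = (1 + w) / (1 - w)"
    proof -
      have e1: "1 + w = (1 - z + z * t) / (1 - z)" unfolding w_def using pz by (simp add: field_simps)
      have e2: "1 - w = (1 - z - z * t) / (1 - z)" unfolding w_def using pz by (simp add: field_simps)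
      have c: "1 - z \<noteq> 0" using pz by simp
      show ?thesis unfolding e1 e2 using c by simp
    qed
    thus ?thesis using sqrt_id[OF w1] by simp
  qed
  have G2: "((\<lambda>(n, k). g (k, n)) has_sum (sqrt ((1 - z + z * t) / (1 - z - z * t)) - 1)) ({1..} \<times> {1..})"
    using G unfolding val has_sum_swap[of g] by simp
  have "((\<lambda>(n, k). real (card (OC n k)) * t ^ k * z ^ n / fact n)
        has_sum (sqrt ((1 - z + z * t) / (1 - z - z * t)) - 1)) ({1..} \<times> {1..}) \<longleftrightarrow>
        ((\<lambda>(n, k). g (k, n)) has_sum (sqrt ((1 - z + z * t) / (1 - z - z * t)) - 1)) ({1..} \<times> {1..})"
  proof (rule has_sum_cong)
    fix p :: "nat \<times> nat" assume "p \<in> {1..} \<times> {1..}"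
    then obtain n k where p: "p = (n, k)" "n \<ge> 1" "k \<ge> 1" by auto
    show "(case p of (n, k) \<Rightarrow> real (card (OC n k)) * t ^ k * z ^ n / fact n) = (case p of (n, k) \<Rightarrow> g (k, n))"
      unfolding p(1) g_def using coeff_eq[OF p(2,3)] by simp
  qed
  thus "((\<lambda>(n, k). real (card (OC n k)) * t ^ k * z ^ n / fact n)
        has_sum (sqrt ((1 - z + z * t) / (1 - z - z * t)) - 1)) ({1..} \<times> {1..})"
    using G2 by simp
qed


end
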